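(* Let $-1<\nu\leq 0$ and let $j_{\nu,1}$ denote the first positive zero of the Bessel function $J_\nu$ of the first kind. Let $p,q\in\mathbb{R}$. Then the inequalities $$(1-p)\mathcal{J}_{\nu+1}(x)+p\frac{\mathcal{J}_{\nu+1}(x)}{\mathcal{J}_{\nu}(x)}>1>(1-q)\mathcal{J}_{\nu+1}(x)+q\frac{\mathcal{J}_{\nu+1}(x)}{\mathcal{J}_{\nu}(x)}$$ hold for all $x\in(0,j_{\nu,1})$ if and only if $p\geq\frac{\nu+1}{\nu+2}$ and $q\leq 0$.
   Context: For $\mu>-1$, $J_\mu(x)=\sum_{n\geq0}\frac{(-1)^n (x/2)^{\mu+2n}}{n!\,\Gamma(\mu+n+1)}$ is the Bessel function of the first kind, and $\mathcal{J}_\mu:\mathbb{R}\to\mathbb{R}$ is the normalized Bessel function $$\mathcal{J}_{\mu}(x)=2^{\mu}\Gamma(\mu+1)x^{-\mu}J_{\mu}(x)=\sum_{n\geq0}\frac{(-1/4)^n}{(\mu+1)_n\, n!}x^{2n},$$ where $(\mu+1)_n=\Gamma(\mu+n+1)/\Gamma(\mu+1)$ is the Pochhammer symbol. In particular $\mathcal{J}_{-1/2}(x)=\cos x$, $\mathcal{J}_{1/2}(x)=\frac{\sin x}{x}$, and $j_{-1/2,1}=\pi/2$. *)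

theory Defs
  imports "HOL-Analysis.Analysis"
begin

definition besselJ :: "real \<Rightarrow> real \<Rightarrow> real" where
  "besselJ mu x = (\<Sum>n. (-1)^n * (x/2) powr (mu + 2 * real n) / (fact n * Gamma (mu + real n + 1)))"

definition normJ :: "real \<Rightarrow> real \<Rightarrow> real" where
  "normJ mu x = (\<Sum>n. (-1/4)^n / (pochhammer (mu + 1) n * fact n) * x ^ (2 * n))"

definition first_zero :: "real \<Rightarrow> real" where
  "first_zero mu = Inf {x. x > 0 \<and> besselJ mu x = 0}"

end

theory Submission
  imports Defs
begin


lemma pos_lemB:
  fixes \<phi> \<phi>' :: "real \<Rightarrow> real" and T t :: real
  assumes cont: "continuous_on {0..<T} \<phi>"
    and phi0: "\<phi> 0 = 0"
    and der: "\<And>t. 0 < t \<Longrightarrow> t < T \<Longrightarrow> DERIV \<phi> t :> \<phi>' t"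
    and pos: "\<And>t. 0 < t \<Longrightarrow> t < T \<Longrightarrow> \<phi> t \<le> 0 \<Longrightarrow> \<phi>' t > 0"
    and t: "0 < t" "t < T"
  shows "\<phi> t > 0"
proof (rule ccontr)
  assume "\<not> \<phi> t > 0"
  hence le: "\<phi> t \<le> 0" by simp
  obtain t1 where t1: "0 < t1" "t1 \<le> t" "\<phi> t1 < 0"
  proof (cases "\<phi> t < 0")
    case True then show ?thesis using that t by auto
  next
    case False
    with le have "\<phi> t = 0" by simp
    obtain d where d: "d > 0" "\<And>h. h > 0 \<Longrightarrow> h < d \<Longrightarrow> \<phi> (t - h) < \<phi> t"
      using DERIV_pos_inc_left[OF der[OF t] pos[OF t le]] by blast
    define h where "h = min (d/2) (t/2)"
    have "h > 0" "h < d" "h < t" using d t by (auto simp: h_def)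
    then show ?thesis using that[of "t - h"] d(2)[of h] \<open>\<phi> t = 0\<close> by auto
  qed
  have cont1: "continuous_on {0..t1} \<phi>"
    by (rule continuous_on_subset[OF cont]) (use t1 t in auto)
  define S where "S = {0..t1} \<inter> \<phi> -` {0..}"
  have cS: "closed S" unfolding S_def
    by (rule continuous_closed_preimage[OF cont1]) auto
  have "0 \<in> S" using phi0 t1 by (auto simp: S_def)
  have bS: "bdd_above S" unfolding S_def by (rule bdd_aboveI[of _ t1]) auto
  define t0 where "t0 = Sup S"
  have t0S: "t0 \<in> S" unfolding t0_def using closed_contains_Sup[OF _ bS cS] \<open>0 \<in> S\<close> by auto
  hence t0: "0 \<le> t0" "t0 \<le> t1" "\<phi> t0 \<ge> 0" by (auto simp: S_def)
  have "t0 \<noteq> t1" using t0 t1 by auto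
  hence lt: "t0 < t1" using t0 by simp
  have neg: "\<phi> u < 0" if "t0 < u" "u \<le> t1" for u
  proof (rule ccontr)
    assume "\<not> \<phi> u < 0"
    hence "u \<in> S" using that t0 by (auto simp: S_def)
    hence "u \<le> t0" unfolding t0_def by (rule cSup_upper[OF _ bS])
    thus False using that by simp
  qed
  have "\<phi> t0 < \<phi> t1"
  proof (rule DERIV_pos_imp_increasing_open[OF lt])
    fix x assume x: "t0 < x" "x < t1"
    show "\<exists>y. DERIV \<phi> x :> y \<and> y > 0"
      using der[of x] pos[of x] neg[of x] x t0 t1 t by force
  next
    show "continuous_on {t0..t1} \<phi>" by (rule continuous_on_subset[OF cont1]) (use t0 in auto)
  qed
  thus False using t0 t1 by simp
qed

lemma pos_lemA:
  fixes \<phi> \<phi>' :: "real \<Rightarrow> real" and T t :: real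
  assumes T: "T > 0"
    and der: "\<And>t. 0 \<le> t \<Longrightarrow> t < T \<Longrightarrow> DERIV \<phi> t :> \<phi>' t"
    and phi0: "\<phi> 0 \<ge> 0" and phi0': "\<phi> 0 = 0 \<Longrightarrow> \<phi>' 0 > 0"
    and pos: "\<And>t. 0 < t \<Longrightarrow> t < T \<Longrightarrow> \<phi> t = 0 \<Longrightarrow> \<phi>' t > 0"
    and t: "0 < t" "t < T"
  shows "\<phi> t > 0"
proof (rule ccontr)
  assume "\<not> \<phi> t > 0"
  hence le: "\<phi> t \<le> 0" by simp
  have contT: "continuous_on {0..<T} \<phi>"
    by (intro continuous_at_imp_continuous_on ballI) (use der DERIV_isCont in auto)
  obtain \<delta> where \<delta>: "\<delta> > 0" "\<delta> \<le> T" "\<And>u. 0 < u \<Longrightarrow> u < \<delta> \<Longrightarrow> \<phi> u > 0"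
  proof (cases "\<phi> 0 = 0")
    case True
    obtain d where d: "d > 0" "\<And>h. h > 0 \<Longrightarrow> h < d \<Longrightarrow> \<phi> 0 < \<phi> (0 + h)"
      using DERIV_pos_inc_right[OF der[of 0] phi0'[OF True]] T by auto
    show ?thesis using that[of "min d T"] d T True by auto
  next
    case False
    hence p: "\<phi> 0 > 0" using phi0 by simp
    have "isCont \<phi> 0" using der[of 0] T by (auto intro: DERIV_isCont)
    then obtain d where d: "d > 0" "\<And>x. dist x 0 < d \<Longrightarrow> dist (\<phi> x) (\<phi> 0) < \<phi> 0"
      using p unfolding continuous_at_eps_delta by blast
    have "\<phi> u > 0" if "0 < u" "u < min d T" for u
      using d(2)[of u] that by (auto simp: dist_real_def abs_if split: if_splits)
    then show ?thesis using that[of "min d T"] d T by auto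
  qed
  have "t \<ge> \<delta>" using \<delta>(3)[of t] le t by force
  define a0 where "a0 = \<delta>/2"
  have a0: "0 < a0" "a0 < \<delta>" "\<phi> a0 > 0" using \<delta> by (auto simp: a0_def)
  have cont1: "continuous_on {a0..t} \<phi>"
    by (rule continuous_on_subset[OF contT]) (use t a0 in auto)
  define S where "S = {a0..t} \<inter> \<phi> -` {..0}"
  have cS: "closed S" unfolding S_def
    by (rule continuous_closed_preimage[OF cont1]) auto
  have "t \<in> S" using le a0 \<open>t \<ge> \<delta>\<close> by (auto simp: S_def)
  have bS: "bdd_below S" unfolding S_def by (rule bdd_belowI[of _ a0]) auto
  define t0 where "t0 = Inf S"
  have t0S: "t0 \<in> S" unfolding t0_def using closed_contains_Inf[OF _ bS cS] \<open>t \<in> S\<close> by auto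
  hence t0: "a0 \<le> t0" "t0 \<le> t" "\<phi> t0 \<le> 0" by (auto simp: S_def)
  have lt: "a0 < t0" using t0 a0 by (cases "a0 = t0") auto
  obtain z where z: "a0 \<le> z" "z \<le> t0" "\<phi> z = 0"
    using IVT2'[of \<phi> t0 0 a0] t0 a0 continuous_on_subset[OF cont1, of "{a0..t0}"] by auto
  have "z \<in> S" using z t0 by (auto simp: S_def)
  hence "t0 \<le> z" unfolding t0_def by (rule cInf_lower[OF _ bS])
  hence zt: "z = t0" using z by simp
  obtain d where d: "d > 0" "\<And>h. h > 0 \<Longrightarrow> h < d \<Longrightarrow> \<phi> (t0 - h) < \<phi> t0"
    using DERIV_pos_inc_left[OF der[of t0] pos[of t0]] z zt lt a0 t0 t by fastforce
  define h where "h = min (d/2) ((t0 - a0)/2)"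
  have h: "h > 0" "h < d" "h < t0 - a0" using d lt by (auto simp: h_def min_def)
  have "t0 - h \<in> S" using d(2)[OF h(1,2)] z zt h t0 by (auto simp: S_def)
  hence "t0 \<le> t0 - h" unfolding t0_def by (rule cInf_lower[OF _ bS])
  thus False using h by simp
qed



definition coef :: "real \<Rightarrow> nat \<Rightarrow> real" where
  "coef \<mu> n = (-1/4)^n / (pochhammer (\<mu> + 1) n * fact n)"

definition B :: "real \<Rightarrow> real \<Rightarrow> real" where
  "B \<mu> t = (\<Sum>n. coef \<mu> n * t ^ n)"

lemma poch_pos: "\<mu> > -1 \<Longrightarrow> pochhammer (\<mu> + 1) n > (0::real)"
  by (intro pochhammer_pos) simp

lemma coef_Suc: "\<mu> > -1 \<Longrightarrow> coef \<mu> (Suc n) = coef \<mu> n * (-1/4) / ((\<mu> + 1 + n) * (n + 1))"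
  using poch_pos[of \<mu> n]
  by (simp add: coef_def pochhammer_rec' field_simps)

lemma B_summable:
  assumes "\<mu> > -1"
  shows "summable (\<lambda>n. coef \<mu> n * t ^ n)"
proof (rule summable_ratio_test[where c = "1/2" and N = "nat \<lceil>\<bar>t\<bar>\<rceil> + 1"])
  fix n assume n: "n \<ge> nat \<lceil>\<bar>t\<bar>\<rceil> + 1"
  hence n1: "real n \<ge> \<bar>t\<bar>" "real n \<ge> 1" by linarith+
  have pos: "\<mu> + 1 + n > 0" using assms by simp
  have e: "coef \<mu> (Suc n) * t ^ Suc n = (coef \<mu> n * t ^ n) * (- t / (4 * ((\<mu> + 1 + real n) * (real n + 1))))"
    using pos by (simp add: coef_Suc[OF assms] field_simps)
  have "norm (coef \<mu> (Suc n) * t ^ Suc n) = norm (coef \<mu> n * t ^ n) * (\<bar>t\<bar> / (4 * ((\<mu> + 1 + real n) * (real n + 1))))"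
    unfolding e using pos by (simp add: abs_mult abs_divide)
  also have "\<dots> \<le> norm (coef \<mu> n * t ^ n) * (1/2)"
  proof (rule mult_left_mono)
    have "(\<mu> + 1 + real n) * (real n + 1) \<ge> real n * 1"
      using assms by (intro mult_mono) auto
    hence "\<bar>t\<bar> \<le> 2 * ((\<mu> + 1 + real n) * (real n + 1))" using n1 by linarith
    show "\<bar>t\<bar> / (4 * ((\<mu> + 1 + real n) * (real n + 1))) \<le> 1 / 2"
    proof -
      have "0 < 4 * ((\<mu> + 1 + real n) * (real n + 1))" using pos by simp
      thus ?thesis using \<open>\<bar>t\<bar> \<le> 2 * ((\<mu> + 1 + real n) * (real n + 1))\<close> by (simp add: pos_divide_le_eq mult.commute)
    qed
  qed simp
  finally show "norm (coef \<mu> (Suc n) * t ^ Suc n) \<le> 1/2 * norm (coef \<mu> n * t ^ n)" by simp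
qed simp

lemma alg: "\<And>D1 D2 N M K::real. D1 > 0 \<Longrightarrow> D2 > 0 \<Longrightarrow> N > 0 \<Longrightarrow> M > 0 \<Longrightarrow> D2 = D1 + N \<Longrightarrow>
     D1 * (-K/(4*D1*N) - (-K/(4*D2*N))) = -(K*M/D2)/(4*M)"
proof -
  fix D1 D2 N M K :: real assume a: "D1 > 0" "D2 > 0" "N > 0" "M > 0" "D2 = D1 + N"
  have "D1 * (-K/(4*D1*N) - (-K/(4*D2*N))) = K * (D1 - D2) / (4 * D2 * N)"
    using a(1-4) by (simp add: field_simps)
  also have "\<dots> = K * (- N) / (4 * D2 * N)" using a(5) by simp
  also have "\<dots> = - K / (4 * D2)" using a(2,3) by (simp add: field_simps)
  also have "\<dots> = -(K*M/D2)/(4*M)" using a(2,4) by (simp add: field_simps)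
  finally show "D1 * (-K/(4*D1*N) - (-K/(4*D2*N))) = -(K*M/D2)/(4*M)" .
qed

lemma normJ_B: "normJ \<mu> x = B \<mu> (x^2)"
  unfolding normJ_def B_def coef_def by (simp add: power_mult)

lemma diffs_coef:
  assumes "\<mu> > -1"
  shows "diffs (coef \<mu>) n = - coef (\<mu> + 1) n / (4 * (\<mu> + 1))"
proof -
  have p: "pochhammer (\<mu> + 1) (Suc n) = (\<mu> + 1) * pochhammer (\<mu> + 2) n"
    by (simp add: pochhammer_rec add.assoc)
  have "pochhammer (\<mu> + 2) n > 0" using poch_pos[of "\<mu>+1" n] assms by (simp add: add.assoc)
  moreover have f: "fact (Suc n) = (real (Suc n)) * (fact n :: real)" by simp
  have g: "\<And>c x y f::real. c \<noteq> 0 \<Longrightarrow> c * (x / (y * (c * f))) = x / (y * f)" by simp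
  ultimately show ?thesis using assms unfolding diffs_def coef_def p f
    by (subst g) (auto simp: field_simps add.assoc)
qed

lemma B_deriv:
  assumes "\<mu> > -1"
  shows "DERIV (B \<mu>) t :> - B (\<mu> + 1) t / (4 * (\<mu> + 1))"
proof -
  have "DERIV (B \<mu>) t :> (\<Sum>n. diffs (coef \<mu>) n * t ^ n)"
    unfolding B_def by (rule termdiffs_strong_converges_everywhere) (rule B_summable[OF assms])
  also have "(\<Sum>n. diffs (coef \<mu>) n * t ^ n) = (\<Sum>n. (- 1 / (4 * (\<mu> + 1))) * (coef (\<mu> + 1) n * t ^ n))"
    by (simp add: diffs_coef[OF assms])
  also have "\<dots> = - B (\<mu> + 1) t / (4 * (\<mu> + 1))"
    unfolding B_def using B_summable[of "\<mu>+1" t] assms by (subst suminf_mult) auto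
  finally show ?thesis .
qed

lemma coef_id:
  assumes "\<mu> > -1"
  shows "(\<mu> + 1) * (coef \<mu> (Suc n) - coef (\<mu> + 1) (Suc n)) = - coef (\<mu> + 2) n / (4 * (\<mu> + 2))"
proof -
  define P2 where "P2 = pochhammer (\<mu> + 2) n"
  have h1: "pochhammer (\<mu> + 1) (Suc n) = (\<mu> + 1) * P2"
    by (simp add: pochhammer_rec add.assoc P2_def)
  have h2: "pochhammer (\<mu> + 1 + 1) (Suc n) = (\<mu> + 2 + n) * P2"
    by (simp add: pochhammer_rec' P2_def add.assoc)
  have h3: "(\<mu> + 2) * pochhammer (\<mu> + 2 + 1) n = (\<mu> + 2 + n) * P2"
    by (metis h2 pochhammer_rec one_add_one add.assoc)
  have p2: "P2 > 0" using poch_pos[of "\<mu>+1" n] assms by (simp add: add.assoc P2_def)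
  have p3: "pochhammer (\<mu> + 2 + 1) n > 0" by (rule pochhammer_pos) (use assms in simp)
  have e: "pochhammer (\<mu> + 2 + 1) n = (\<mu> + 2 + n) * P2 / (\<mu> + 2)"
    using h3 assms by (simp add: field_simps)
  define K where "K = (-1/4)^n / (P2 * fact n)"
  have fS: "fact (Suc n) = (real n + 1) * (fact n :: real)" by simp
  have fp: "fact n > (0::real)" by simp
  have m: "\<mu> + 2 + n > 0" "\<mu> + 1 > 0" "\<mu> + 2 > 0" "real n + 1 > 0" using assms by auto
  have A: "coef \<mu> (Suc n) = - K / (4 * (\<mu> + 1) * (real n + 1))"
    unfolding coef_def h1 fS K_def using m p2 fp by (simp add: field_simps)
  have Bq: "coef (\<mu> + 1) (Suc n) = - K / (4 * (\<mu> + 2 + n) * (real n + 1))"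
    unfolding coef_def h2 fS K_def using m p2 fp by (simp add: field_simps)
  have C: "coef (\<mu> + 2) n = K * (\<mu> + 2) / (\<mu> + 2 + n)"
    unfolding coef_def e K_def using m p2 fp by (simp add: field_simps)
  show ?thesis unfolding A Bq C using m by (intro alg) auto
qed

lemma B_tderiv:
  assumes "\<mu> > -1"
  shows "t * (- B (\<mu> + 2) t / (4 * (\<mu> + 2))) = (\<mu> + 1) * (B \<mu> t - B (\<mu> + 1) t)"
proof -
  let ?f = "\<lambda>n. (\<mu> + 1) * (coef \<mu> n - coef (\<mu> + 1) n) * t ^ n"
  have s: "?f sums ((\<mu> + 1) * (B \<mu> t - B (\<mu> + 1) t))"
    unfolding B_def using sums_mult[OF sums_diff[OF summable_sums[OF B_summable[OF assms, of t]] summable_sums[OF B_summable[of "\<mu>+1" t]]], of "\<mu>+1"] assms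
    by (simp add: algebra_simps)
  have "(\<lambda>n. ?f (Suc n)) = (\<lambda>n. t * (- 1 / (4 * (\<mu> + 2))) * (coef (\<mu> + 2) n * t ^ n))"
    using coef_id[OF assms] by (auto simp: fun_eq_iff)
  moreover have "(\<lambda>n. t * (- 1 / (4 * (\<mu> + 2))) * (coef (\<mu> + 2) n * t ^ n)) sums (t * (- 1 / (4 * (\<mu> + 2))) * B (\<mu> + 2) t)"
    unfolding B_def using B_summable[of "\<mu>+2" t] assms by (intro sums_mult summable_sums) auto
  ultimately have "(\<lambda>n. ?f (Suc n)) sums (t * (- 1 / (4 * (\<mu> + 2))) * B (\<mu> + 2) t)" by simp
  hence "?f sums (t * (- 1 / (4 * (\<mu> + 2))) * B (\<mu> + 2) t + ?f 0)" by (rule sums_Suc_iff[THEN iffD1])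
  moreover have "?f 0 = 0" by (simp add: coef_def)
  ultimately have "?f sums (t * (- 1 / (4 * (\<mu> + 2))) * B (\<mu> + 2) t)" by (simp only: add_0_right)
  from sums_unique2[OF this s] show ?thesis by simp
qed

lemma B_zero: "B \<mu> 0 = 1"
  unfolding B_def powser_zero by (simp add: coef_def)

lemma B_cont: "\<mu> > -1 \<Longrightarrow> isCont (B \<mu>) t"
  using B_deriv DERIV_isCont by blast



lemma besselJ_B:
  assumes mu: "\<mu> > -1" and x: "x > 0"
  shows "besselJ \<mu> x = (x/2) powr \<mu> / Gamma (\<mu> + 1) * B \<mu> (x^2)"
proof -
  define C where "C = (x/2) powr \<mu> / Gamma (\<mu> + 1)"
  have G: "Gamma (\<mu> + real n + 1) = Gamma (\<mu> + 1) * pochhammer (\<mu> + 1) n" for n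
  proof -
    have "\<mu> + 1 \<notin> \<int>\<^sub>\<le>\<^sub>0" using mu by (auto elim!: nonpos_Ints_cases)
    hence "pochhammer (\<mu> + 1) n = Gamma (\<mu> + 1 + real n) / Gamma (\<mu> + 1)"
      by (rule pochhammer_Gamma)
    moreover have "Gamma (\<mu> + 1) > 0" using mu by (intro Gamma_real_pos) simp
    ultimately show ?thesis by (simp add: field_simps)
  qed
  have trm: "(-1)^n * (x/2) powr (\<mu> + 2 * real n) / (fact n * Gamma (\<mu> + real n + 1))
      = C * (coef \<mu> n * (x^2)^n)" for n
  proof -
    have "(x/2) powr (\<mu> + 2 * real n) = (x/2) powr \<mu> * (x/2) powr (real (2*n))"
      by (simp add: powr_add)
    also have "(x/2) powr (real (2*n)) = (x/2)^(2*n)" using x powr_realpow[of "x/2" "2*n"] by simp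
    also have "(x/2)^(2*n) = (x^2)^n / 4^n" by (simp add: power_mult power_divide)
    finally have "(x/2) powr (\<mu> + 2 * real n) = (x/2) powr \<mu> * (x^2)^n / 4^n" by simp
    moreover have "(-1::real)^n / 4^n = (-1/4)^n" by (metis power_divide minus_divide_left)
    ultimately show ?thesis unfolding C_def coef_def G
      by (simp add: field_simps)
  qed
  have "besselJ \<mu> x = (\<Sum>n. C * (coef \<mu> n * (x^2)^n))"
    unfolding besselJ_def trm ..
  also have "\<dots> = C * B \<mu> (x^2)" unfolding B_def
    using B_summable[OF mu] by (rule suminf_mult)
  finally show ?thesis by (simp add: C_def)
qed

lemma besselJ_zero_iff:
  assumes mu: "\<mu> > -1" and x: "x > 0"
  shows "besselJ \<mu> x = 0 \<longleftrightarrow> B \<mu> (x^2) = 0"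
proof -
  have "Gamma (\<mu> + 1) > 0" using mu by (intro Gamma_real_pos) simp
  moreover have "(x/2) powr \<mu> > 0" using x by simp
  ultimately show ?thesis using besselJ_B[OF assms] by simp
qed

lemma A_dec:
  assumes nu: "-1 < (\<nu>::real)"
  defines "A \<equiv> \<lambda>n. 2^(n+3) / (pochhammer (\<nu>+1) (n+3) * fact (n+3))"
  shows "A (Suc n) \<le> A n"
proof -
  define P where "P = pochhammer (\<nu>+1) (n+3)"
  define F where "F = (fact (n+3) :: real)"
  have P: "P > 0" unfolding P_def by (rule pochhammer_pos) (use nu in simp)
  have F: "F > 0" unfolding F_def by simp
  have e: "A (Suc n) = 2^(n+3) * 2 / ((\<nu> + 1 + real (n+3)) * P * ((real (n+3) + 1) * F))"
  proof -
    have "A (Suc n) = 2^(Suc (n+3)) / (pochhammer (\<nu>+1) (Suc (n+3)) * fact (Suc (n+3)))"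
      unfolding A_def by (simp only: add_Suc)
    also have "\<dots> = 2 * 2^(n+3) / (((\<nu> + 1 + real (n+3)) * P) * (real (Suc (n+3)) * F))"
      unfolding P_def F_def by (simp only: pochhammer_rec' fact_Suc power_Suc of_nat_mult)
    finally show ?thesis by (simp add: mult_ac)
  qed
  have d: "(\<nu> + 1 + real (n+3)) * (real (n+3) + 1) \<ge> 2 * 1"
    using nu by (intro mult_mono) auto
  have "A (Suc n) = A n * (2 / ((\<nu> + 1 + real (n+3)) * (real (n+3) + 1)))"
  proof -
    have An: "A n = 2^(n+3) / (P * F)" unfolding A_def P_def F_def ..
    have "\<nu> + 1 + real (n+3) > 0" "real (n+3) + 1 > 0" using nu by auto
    thus ?thesis unfolding e An using P F by (simp add: field_simps)
  qed
  also have "\<dots> \<le> A n * 1"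
  proof (rule mult_left_mono)
    show "A n \<ge> 0" unfolding A_def P_def[symmetric] F_def[symmetric] using P F by simp
    show "2 / ((\<nu> + 1 + real (n+3)) * (real (n+3) + 1)) \<le> 1" using d by simp
  qed
  finally show ?thesis by simp
qed

lemma sum3_alg: "-1 < (\<nu>::real) \<Longrightarrow> 1 - 2 / (\<nu>+1) + 2 / ((\<nu>+1) * (\<nu>+2)) = \<nu> / (\<nu> + 2)"
proof -
  assume "-1 < \<nu>"
  hence a: "\<nu> + 1 \<noteq> 0" "\<nu> + 2 \<noteq> 0" by auto
  have "1 - 2 / (\<nu>+1) + 2 / ((\<nu>+1) * (\<nu>+2)) = ((\<nu>+1)*(\<nu>+2) - 2*(\<nu>+2) + 2) / ((\<nu>+1) * (\<nu>+2))"
  proof -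
    have e1: "2/(\<nu>+1) = 2*(\<nu>+2)/((\<nu>+1)*(\<nu>+2))" using nonzero_mult_divide_mult_cancel_right[OF a(2), of 2 "\<nu>+1"] by simp
    have e2: "(1::real) = ((\<nu>+1)*(\<nu>+2))/((\<nu>+1)*(\<nu>+2))" using a by simp
    show ?thesis by (subst e2, subst e1) (simp only: diff_divide_distrib add_divide_distrib)
  qed
  also have "(\<nu>+1)*(\<nu>+2) - 2*(\<nu>+2) + 2 = \<nu> * (\<nu>+1)" by (simp add: algebra_simps)
  also have "\<nu> * (\<nu>+1) / ((\<nu>+1) * (\<nu>+2)) = \<nu> / (\<nu> + 2)" using a by simp
  finally show ?thesis .
qed

lemma B_8_nonpos:
  assumes nu: "-1 < \<nu>" "\<nu> \<le> 0"
  shows "B \<nu> 8 \<le> 0"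
proof -
  define T where "T n = coef \<nu> n * 8 ^ n" for n
  have sT: "summable T" unfolding T_def by (rule B_summable[OF nu(1)])
  define A where "A = (\<lambda>n. 2^(n+3) / (pochhammer (\<nu>+1) (n+3) * fact (n+3)) :: real)"
  have Tpos: "coef \<nu> n * 8^n = (-2)^n / (pochhammer (\<nu>+1) n * fact n)" for n
    by (simp add: coef_def power_mult_distrib[symmetric])
  have TA: "T (n + 3) = - ((-1)^n * A n)" for n
  proof -
    have "(-2::real)^(n+3) = -((-1)^n * 2^(n+3))"
      by (simp add: power_add power_mult_distrib[symmetric])
    thus ?thesis unfolding T_def Tpos A_def by simp
  qed
  have Apos: "A n \<ge> 0" for n
    unfolding A_def using poch_pos[OF nu(1)] by (intro divide_nonneg_pos mult_pos_pos) auto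
  have Adec: "A (Suc n) \<le> A n" for n
    unfolding A_def by (rule A_dec[OF nu(1)])
  have Alim: "A \<longlonglongrightarrow> 0"
  proof -
    have "T \<longlonglongrightarrow> 0" by (rule summable_LIMSEQ_zero[OF sT])
    hence "(\<lambda>n. T (n + 3)) \<longlonglongrightarrow> 0" by (rule LIMSEQ_ignore_initial_segment)
    hence "(\<lambda>n. \<bar>T (n + 3)\<bar>) \<longlonglongrightarrow> 0" by (simp add: tendsto_rabs_zero_iff)
    moreover have "\<bar>T (n + 3)\<bar> = A n" for n using Apos[of n] TA[of n] by (simp add: abs_mult)
    ultimately show ?thesis by simp
  qed
  have L: "0 \<le> (\<Sum>i. (-1)^i * A i)"
    using summable_Leibniz'(2)[OF Alim Apos Adec, of 0] by simp
  have "B \<nu> 8 = (\<Sum>n. T (n + 3)) + (\<Sum>i<3. T i)"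
    unfolding B_def T_def[symmetric] by (rule suminf_split_initial_segment[OF sT])
  also have "(\<Sum>n. T (n + 3)) = - (\<Sum>i. (-1)^i * A i)"
    unfolding TA using summable_Leibniz'(1)[OF Alim Apos Adec] by (rule suminf_minus)
  also have "(\<Sum>i<3. T i) = 1 - 2 / (\<nu>+1) + 2 / ((\<nu>+1) * (\<nu>+2))"
    unfolding T_def Tpos by (simp add: numeral_3_eq_3 eval_nat_numeral pochhammer_Suc add.assoc)
  also have "\<dots> = \<nu> / (\<nu> + 2)" by (rule sum3_alg[OF nu(1)])
  finally have "B \<nu> 8 = - (\<Sum>i. (-1)^i * A i) + \<nu> / (\<nu> + 2)" .
  moreover have "\<nu> / (\<nu> + 2) \<le> 0" using nu by (intro divide_nonpos_pos) auto
  ultimately show ?thesis using L by linarith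
qed



locale bes =
  fixes nu :: real
  assumes nu: "-1 < nu" "nu \<le> 0"
begin

definition "a = nu + 1"
definition "G = B nu"
definition "F = B (nu + 1)"
definition "F2 = B (nu + 2)"
definition "j = first_zero nu"
definition "T = j^2"

lemma a_pos: "a > 0" and a_le: "a \<le> 1"
  using nu by (auto simp: a_def)

lemma G_deriv: "DERIV G t :> - F t / (4 * a)"
  unfolding G_def F_def a_def by (rule B_deriv[OF nu(1)])

lemma F_deriv: "DERIV F t :> - F2 t / (4 * (a + 1))"
proof -
  have "DERIV (B (nu + 1)) t :> - B (nu + 1 + 1) t / (4 * (nu + 1 + 1))"
    by (rule B_deriv) (use nu in simp)
  thus ?thesis unfolding F_def F2_def a_def by (simp add: add.assoc)
qed

lemma F_tderiv: "t * (- F2 t / (4 * (a + 1))) = a * (G t - F t)"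
  using B_tderiv[OF nu(1), of t] unfolding F_def F2_def G_def a_def by (simp add: add.assoc)

lemma G0: "G 0 = 1" and F0: "F 0 = 1" and F20: "F2 0 = 1"
  by (simp_all add: G_def F_def F2_def B_zero)

lemma G_cont: "isCont G t" using G_deriv DERIV_isCont by blast
lemma F_cont: "isCont F t" using F_deriv DERIV_isCont by blast
lemma F2_cont: "isCont F2 t" unfolding F2_def by (rule B_cont) (use nu in simp)

lemma zero_props: "j > 0" "G (j^2) = 0" "\<And>x. 0 \<le> x \<Longrightarrow> x < j \<Longrightarrow> G (x^2) > 0"
proof -
  define h where "h x = G (x^2)" for x
  have hc: "isCont h x" for x unfolding h_def
    by (intro continuous_intros isCont_o2[OF _ G_cont]) 
  have hcon: "continuous_on S h" for S by (intro continuous_at_imp_continuous_on ballI hc)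
  have h0: "h 0 = 1" by (simp add: h_def G0)
  obtain \<delta> where \<delta>: "\<delta> > 0" "\<And>x. \<bar>x\<bar> < \<delta> \<Longrightarrow> h x > 0"
  proof -
    obtain d where d: "d > 0" "\<And>x. dist x 0 < d \<Longrightarrow> dist (h x) (h 0) < 1"
      using hc[of 0] unfolding continuous_at_eps_delta by (meson zero_less_one)
    show ?thesis using that[of d] d h0 by (force simp: dist_real_def abs_if split: if_splits)
  qed
  define Z where "Z = {x. x > 0 \<and> besselJ nu x = 0}"
  have Z: "Z = {x. \<delta> \<le> x \<and> h x = 0}"
  proof -
    have "x > 0 \<and> besselJ nu x = 0 \<longleftrightarrow> \<delta> \<le> x \<and> h x = 0" for x
    proof
      assume "x > 0 \<and> besselJ nu x = 0"
      hence "x > 0" "h x = 0" using besselJ_zero_iff[OF nu(1)] by (auto simp: h_def G_def)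
      thus "\<delta> \<le> x \<and> h x = 0" using \<delta>(2)[of x] by force
    next
      assume "\<delta> \<le> x \<and> h x = 0"
      thus "x > 0 \<and> besselJ nu x = 0" using besselJ_zero_iff[OF nu(1), of x] \<delta>(1) by (auto simp: h_def G_def)
    qed
    thus ?thesis unfolding Z_def by blast
  qed
  have "h (sqrt 8) \<le> 0" using B_8_nonpos[OF nu] by (simp add: h_def G_def)
  then obtain z where z: "0 \<le> z" "z \<le> sqrt 8" "h z = 0"
    using IVT2'[of h "sqrt 8" 0 0] h0 hcon by auto
  have "\<delta> \<le> z" using z \<delta>(2)[of z] by force
  hence "z \<in> Z" using z by (auto simp: Z)
  hence ne: "Z \<noteq> {}" by auto
  have cZ: "closed Z" unfolding Z
    by (intro closed_Collect_conj closed_Collect_le closed_Collect_eq continuous_on_const continuous_on_id hcon)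
  have bZ: "bdd_below Z" unfolding Z by (rule bdd_belowI[of _ \<delta>]) auto
  have jZ: "j \<in> Z" unfolding j_def first_zero_def Z_def[symmetric] by (rule closed_contains_Inf[OF ne bZ cZ])
  thus j0: "j > 0" "G (j^2) = 0" using \<delta> by (auto simp: Z h_def)
  fix x assume x: "0 \<le> x" "x < j"
  have nz: "h y \<noteq> 0" if "0 \<le> y" "y < j" for y
  proof
    assume hy: "h y = 0"
    have "y \<noteq> 0" using hy h0 by auto
    have "\<delta> \<le> y" using hy that \<delta>(2)[of y] by force
    hence "y \<in> Z" using hy by (auto simp: Z)
    hence "j \<le> y" unfolding j_def first_zero_def Z_def[symmetric] by (rule cInf_lower[OF _ bZ])
    thus False using that by simp
  qed
  show "G (x^2) > 0"
  proof (rule ccontr)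
    assume "\<not> G (x^2) > 0"
    hence "h x \<le> 0" by (simp add: h_def)
    then obtain y where "0 \<le> y" "y \<le> x" "h y = 0"
      using IVT2'[of h x 0 0] h0 hcon x by auto
    thus False using nz[of y] x by simp
  qed
qed

lemma T_pos: "T > 0" using zero_props(1) by (simp add: T_def)
lemma G_T: "G T = 0" using zero_props(2) by (simp add: T_def)
lemma G_pos: "0 \<le> t \<Longrightarrow> t < T \<Longrightarrow> G t > 0"
proof -
  assume t: "0 \<le> t" "t < T"
  have "sqrt t < j" using t zero_props(1) unfolding T_def
    by (metis abs_of_pos real_sqrt_abs real_sqrt_less_iff)
  thus ?thesis using zero_props(3)[of "sqrt t"] t by simp
qed

end

context bes begin

lemma Fp0: "- F2 0 / (4 * (a + 1)) + F 0 / (4 * a) > 0"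
proof -
  have "1/(4*(a+1)) < 1/(4*a)" using a_pos by (intro frac_less2) auto
  thus ?thesis by (simp add: F20 F0)
qed

lemma F_gt_G: "0 < t \<Longrightarrow> t < T \<Longrightarrow> F t > G t"
proof -
  assume t: "0 < t" "t < T"
  have "(\<lambda>t. F t - G t) t > 0"
  proof (rule pos_lemA[OF T_pos, where \<phi> = "\<lambda>t. F t - G t" and \<phi>' = "\<lambda>t. - F2 t / (4 * (a + 1)) + F t / (4 * a)"])
    fix t show "DERIV (\<lambda>t. F t - G t) t :> - F2 t / (4 * (a + 1)) + F t / (4 * a)"
      using DERIV_diff[OF F_deriv G_deriv, of t] by simp
  next
    show "(\<lambda>t. F t - G t) 0 \<ge> 0" by (simp add: F0 G0)
  next
    show "- F2 0 / (4 * (a + 1)) + F 0 / (4 * a) > 0" by (rule Fp0)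
  next
    fix t assume t: "0 < t" "t < T" "F t - G t = 0"
    have "t * (- F2 t / (4 * (a + 1))) = 0" using F_tderiv[of t] t by simp
    hence "- F2 t / (4 * (a + 1)) = 0" using t by simp
    moreover have "F t > 0" using G_pos[of t] t by simp
    ultimately show "- F2 t / (4 * (a + 1)) + F t / (4 * a) > 0" using a_pos by simp
  qed (use t in auto)
  thus ?thesis by simp
qed

lemma F_pos: "0 \<le> t \<Longrightarrow> t < T \<Longrightarrow> F t > 0"
  using F_gt_G[of t] G_pos[of t] F0 by (cases "t = 0") auto

lemma cont_on: "isCont f x \<Longrightarrow> True" by simp

lemma G_lt_1: "0 < t \<Longrightarrow> t < T \<Longrightarrow> G t < 1"
proof -
  assume t: "0 < t" "t < T"
  have "(\<lambda>t. 1 - G t) t > 0"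
  proof (rule pos_lemB[where \<phi> = "\<lambda>t. 1 - G t" and \<phi>' = "\<lambda>t. F t / (4 * a)" and T = T])
    show "continuous_on {0..<T} (\<lambda>t. 1 - G t)"
      by (intro continuous_at_imp_continuous_on ballI continuous_intros G_cont)
    fix t show "DERIV (\<lambda>t. 1 - G t) t :> F t / (4 * a)"
      using DERIV_diff[OF DERIV_const G_deriv, of 1 t] by simp
  next
    fix t assume "0 < t" "t < T"
    thus "F t / (4 * a) > 0" using F_pos[of t] a_pos by simp
  qed (use t G0 in auto)
  thus ?thesis by simp
qed

lemma F_lt_1: "0 < t \<Longrightarrow> t < T \<Longrightarrow> F t < 1"
proof -
  assume t: "0 < t" "t < T"
  have "(\<lambda>t. 1 - F t) t > 0"
  proof (rule pos_lemB[where \<phi> = "\<lambda>t. 1 - F t" and \<phi>' = "\<lambda>t. F2 t / (4 * (a + 1))" and T = T])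
    show "continuous_on {0..<T} (\<lambda>t. 1 - F t)"
      by (intro continuous_at_imp_continuous_on ballI continuous_intros F_cont)
    fix t show "DERIV (\<lambda>t. 1 - F t) t :> F2 t / (4 * (a + 1))"
      using DERIV_diff[OF DERIV_const F_deriv, of 1 t] by simp
  next
    fix t assume t: "0 < t" "t < T"
    have "t * (F2 t / (4 * (a + 1))) = a * (F t - G t)" using F_tderiv[of t] by (simp add: algebra_simps)
    also have "\<dots> > 0" using F_gt_G[OF t] a_pos by simp
    finally have h: "t * (F2 t / (4 * (a + 1))) > 0" .
    show "F2 t / (4 * (a + 1)) > 0" using h t by (simp only: zero_less_mult_iff) auto
  qed (use t F0 in auto)
  thus ?thesis by simp
qed

lemma F_T_pos: "F T > 0"
proof -
  define \<Phi> where "\<Phi> t = t powr a * F t" for t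
  have "\<Phi> (T/2) < \<Phi> T"
  proof (rule DERIV_pos_imp_increasing_open[of "T/2" T])
    show "T/2 < T" using T_pos by simp
  next
    fix t assume t: "T/2 < t" "t < T"
    hence tp: "t > 0" using T_pos by simp
    have d: "DERIV \<Phi> t :> a * t powr (a - 1) * F t + (- F2 t / (4 * (a + 1))) * t powr a"
      unfolding \<Phi>_def by (rule DERIV_mult[OF has_real_derivative_powr[OF tp] F_deriv])
    have "t powr a = t * t powr (a - 1)" using tp by (simp add: powr_diff)
    hence e1: "a * t powr (a - 1) * F t + (- F2 t / (4 * (a + 1))) * t powr a
        = t powr (a - 1) * (a * F t + t * (- F2 t / (4 * (a + 1))))" by (simp add: algebra_simps)
    have e2: "a * F t + t * (- F2 t / (4 * (a + 1))) = a * G t"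
      unfolding F_tderiv by (simp add: algebra_simps)
    have "t powr (a - 1) * (a * G t) > 0" using G_pos[of t] t tp a_pos by simp
    hence "a * t powr (a - 1) * F t + (- F2 t / (4 * (a + 1))) * t powr a > 0" unfolding e1 e2 .
    thus "\<exists>y. DERIV \<Phi> t :> y \<and> y > 0" using d by blast
  next
    have "continuous_on {T/2..T} (\<lambda>t. t powr a)"
      using T_pos by (intro continuous_on_powr' continuous_on_id continuous_on_const) auto
    moreover have "continuous_on {T/2..T} F"
      by (intro continuous_at_imp_continuous_on ballI F_cont)
    ultimately show "continuous_on {T/2..T} \<Phi>" unfolding \<Phi>_def
      by (intro continuous_on_mult)
  qed
  moreover have "\<Phi> (T/2) > 0" unfolding \<Phi>_def using T_pos F_pos[of "T/2"] by simp
  ultimately have "T powr a * F T > 0" by (simp add: \<Phi>_def)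
  thus ?thesis using T_pos by (simp add: zero_less_mult_iff)
qed

end

context bes begin

definition "r t = F t / G t"
definition "dF t = - F2 t / (4*(a+1))"
definition "dr t = (dF t * G t - F t * (- F t / (4*a))) / (G t * G t)"
definition "psi t = a - a * r t + t * (r t * r t) / (4*a)"
definition "dpsi t = - (a * dr t) + (r t * r t + t * (2 * r t * dr t)) / (4*a)"

lemma F_deriv': "DERIV F t :> dF t" using F_deriv by (simp add: dF_def)
lemma F_tderiv': "t * dF t = a * (G t - F t)" using F_tderiv by (simp add: dF_def)

lemma r_deriv: "G t \<noteq> 0 \<Longrightarrow> DERIV r t :> dr t"
  unfolding r_def[abs_def] dr_def using DERIV_divide[OF F_deriv' G_deriv] by simp

lemma r0: "r 0 = 1" by (simp add: r_def F0 G0)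
lemma dr0: "dr 0 = 1/(4*a) - 1/(4*(a+1))"
  by (simp add: dr_def dF_def F0 G0 F20)

lemma r_gt1: "0 < t \<Longrightarrow> t < T \<Longrightarrow> r t > 1"
  using F_gt_G[of t] G_pos[of t] by (simp add: r_def)

lemma r_pos: "0 \<le> t \<Longrightarrow> t < T \<Longrightarrow> r t > 0"
  using F_pos[of t] G_pos[of t] by (simp add: r_def)

lemma t_dr: "0 \<le> t \<Longrightarrow> t < T \<Longrightarrow> t * dr t = psi t"
proof -
  assume t: "0 \<le> t" "t < T"
  have g: "G t > 0" using G_pos t by simp
  have "t * dr t = (t * dF t * G t + t * F t * F t / (4*a)) / (G t * G t)"
    by (simp add: dr_def algebra_simps add_divide_distrib)
  also have "\<dots> = (a * (G t - F t) * G t + t * F t * F t / (4*a)) / (G t * G t)"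
    by (simp only: F_tderiv')
  also have "\<dots> = psi t"
    unfolding psi_def r_def using g a_pos by (simp add: field_simps)
  finally show ?thesis .
qed

lemma psi_deriv: "G t \<noteq> 0 \<Longrightarrow> DERIV psi t :> dpsi t"
proof -
  assume g: "G t \<noteq> 0"
  have d: "DERIV r t :> dr t" by (rule r_deriv[OF g])
  have "DERIV (\<lambda>t. a - a * r t + t * (r t * r t) / (4*a)) t :>
      0 - a * dr t + ((1 * (r t * r t) + (dr t * r t + dr t * r t) * t) / (4*a))"
    by (intro DERIV_add DERIV_diff DERIV_const DERIV_cmult DERIV_cdivide DERIV_mult DERIV_ident d
        | simp)+
  thus ?thesis unfolding psi_def[abs_def] dpsi_def by (simp add: algebra_simps)
qed

lemma psi0: "psi 0 = 0" by (simp add: psi_def r0)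

lemma dpsi0: "dpsi 0 > 0"
proof -
  have h1: "a * (1/(4*a)) = 1/4" using a_pos by simp
  have h2: "a * (1/(4*(a+1))) = 1/4 - 1/(4*(a+1))" using a_pos by (simp add: field_simps)
  have "dpsi 0 = - (a * (1/(4*a) - 1/(4*(a+1)))) + 1/(4*a)"
    unfolding dpsi_def dr0 r0 by simp
  also have "\<dots> = 1/(4*a) - 1/(4*(a+1))" unfolding right_diff_distrib h1 h2 by simp
  finally have "dpsi 0 = 1/(4*a) - 1/(4*(a+1))" .
  moreover have "1/(4*(a+1)) < 1/(4*a)" using a_pos by (intro frac_less2) auto
  ultimately show ?thesis by simp
qed

lemma psi_pos: "0 < t \<Longrightarrow> t < T \<Longrightarrow> psi t > 0"
proof (rule pos_lemA[OF T_pos, where \<phi> = psi and \<phi>' = dpsi])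
  fix t assume "0 \<le> t" "t < T"
  thus "DERIV psi t :> dpsi t" using G_pos[of t] by (intro psi_deriv) simp
next
  show "psi 0 \<ge> 0" by (simp add: psi0)
  show "psi 0 = 0 \<Longrightarrow> dpsi 0 > 0" using dpsi0 by simp
next
  fix t assume t: "0 < t" "t < T" "psi t = 0"
  hence "dr t = 0" using t_dr[of t] by simp
  moreover have "r t > 0" using r_pos[of t] t by simp
  ultimately show "dpsi t > 0" using a_pos by (simp add: dpsi_def)
qed

lemma dr_pos: "0 < t \<Longrightarrow> t < T \<Longrightarrow> dr t > 0"
  using t_dr[of t] psi_pos[of t] by (metis less_eq_real_def zero_less_mult_pos)

end


lemma dN_alg:
  fixes a t r dr c :: real
  assumes t: "t \<noteq> 0" and a: "a \<noteq> 0" and c: "c = 4*a*(a+1)"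
    and h: "t * dr = a - a * r + t * (r * r) / (4*a)"
  shows "3 * r^2 * dr - c * ((dr * t - (r - 1)) / (t * t)) = 3 * r^2 * dr + (a+1) * (c * ((r - 1)/t) - r^2) / t"
proof -
  have "c * (dr * t - (r - 1)) = c * (a - a * r + t * (r * r) / (4*a) - (r - 1))"
    using h by (simp add: mult.commute)
  also have "\<dots> = (a+1) * (c * (r - 1)) * (-1) + (a+1) * t * r^2"
    unfolding c using a by (simp add: field_simps power2_eq_square)
  finally have e: "c * (dr * t - (r - 1)) = (a+1) * (c * (r - 1)) * (-1) + (a+1) * t * r^2" .
  have "c * ((dr * t - (r - 1)) / (t * t)) = (c * (dr * t - (r - 1))) / (t * t)" by simp
  also have "\<dots> = ((a+1) * (c * (r - 1)) * (-1) + (a+1) * t * r^2) / (t * t)" unfolding e ..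
  also have "\<dots> = - ((a+1) * (c * ((r - 1)/t) - r^2) / t)" using t by (simp add: field_simps)
  finally show ?thesis by simp
qed

lemma dK_alg:
  fixes a t rr f s c :: real
  assumes t: "t \<noteq> 0" and r: "rr \<noteq> 0" and a: "a \<noteq> 0" and c: "c = 4*a*(a+1)" and s: "s = rr - 1"
  shows "- a * (a + 1 - a * rr) * s / rr + (a * a - a * a * rr + t * rr^2 / 4) = t * (rr^3 - c * (s / t)) / (4 * rr)"
  unfolding c s using t r a by (simp add: field_simps power2_eq_square power3_eq_cube)

context bes begin

definition "c = 4*a*(a+1)"
definition "N t = (if t = 0 then 0 else r t ^ 3 - c * ((r t - 1) / t))"
definition "dN t = 3 * (r t)^2 * dr t - c * ((dr t * t - (r t - 1)) / (t * t))"

lemma r_cont: "0 \<le> t \<Longrightarrow> t < T \<Longrightarrow> isCont r t"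
  using r_deriv[of t] G_pos[of t] DERIV_isCont by force

lemma N_deriv: "0 < t \<Longrightarrow> t < T \<Longrightarrow> DERIV N t :> dN t"
proof -
  assume t: "0 < t" "t < T"
  have d: "DERIV r t :> dr t" using r_deriv[of t] G_pos[of t] t by simp
  have "DERIV (\<lambda>t. r t ^ 3 - c * ((r t - 1) / t)) t :>
     of_nat 3 * (dr t * r t ^ (3 - Suc 0)) - c * (((dr t - 0) * t - (r t - 1) * 1) / (t * t))"
    using t by (intro DERIV_diff DERIV_cmult DERIV_power DERIV_divide DERIV_ident DERIV_const d) auto
  hence "DERIV (\<lambda>t. r t ^ 3 - c * ((r t - 1) / t)) t :> dN t"
    by (simp add: dN_def mult_ac)
  thus ?thesis
    by (rule has_field_derivative_transform_within_open[where S = "{0<..}"]) (use t in \<open>auto simp: N_def\<close>)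
qed

lemma c_dr0: "c * dr 0 = 1"
proof -
  have "c * dr 0 = 4*a*(a+1)/(4*a) - 4*a*(a+1)/(4*(a+1))"
    unfolding c_def dr0 by (simp add: right_diff_distrib)
  also have "4*a*(a+1)/(4*a) = a + 1" using a_pos by simp
  also have "4*a*(a+1)/(4*(a+1)) = a"
    using nonzero_mult_divide_mult_cancel_right[of "a+1" "4*a" 4] a_pos by simp
  finally show ?thesis by simp
qed

lemma N_cont0: "isCont N 0"
proof -
  have "DERIV r 0 :> dr 0" using r_deriv[of 0] by (simp add: G0)
  hence "((\<lambda>y. (r y - r 0) / (y - 0)) \<longlongrightarrow> dr 0) (at 0)"
    by (simp add: has_field_derivative_iff)
  hence l: "((\<lambda>y. (r y - 1) / y) \<longlongrightarrow> dr 0) (at 0)" by (simp add: r0)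
  have "isCont r 0" using r_cont[of 0] T_pos by simp
  hence "(r \<longlongrightarrow> r 0) (at 0)" by (simp add: isCont_def)
  hence "((\<lambda>y. r y ^ 3 - c * ((r y - 1) / y)) \<longlongrightarrow> r 0 ^ 3 - c * dr 0) (at 0)"
    by (intro tendsto_intros l)
  hence "((\<lambda>y. r y ^ 3 - c * ((r y - 1) / y)) \<longlongrightarrow> 0) (at 0)" by (simp add: r0 c_dr0)
  moreover have "eventually (\<lambda>y. r y ^ 3 - c * ((r y - 1) / y) = N y) (at 0)"
    by (auto simp: N_def eventually_at_filter)
  ultimately have "(N \<longlongrightarrow> 0) (at 0)" by (rule Lim_transform_eventually)
  thus ?thesis by (simp add: isCont_def N_def)
qed

lemma N_pos: "0 < t \<Longrightarrow> t < T \<Longrightarrow> N t > 0"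
proof (rule pos_lemB[where \<phi> = N and \<phi>' = dN and T = T])
  show "continuous_on {0..<T} N"
  proof (intro continuous_at_imp_continuous_on ballI)
    fix x assume "x \<in> {0..<T}"
    thus "isCont N x" using N_cont0 N_deriv[of x] DERIV_isCont by (cases "x = 0") auto
  qed
  show "N 0 = 0" by (simp add: N_def)
  show "\<And>t. 0 < t \<Longrightarrow> t < T \<Longrightarrow> DERIV N t :> dN t" by (rule N_deriv)
next
  fix t assume t: "0 < t" "t < T" "N t \<le> 0"
  define X where "X = c * ((r t - 1) / t)"
  have NX: "r t ^ 3 \<le> X" using t by (simp add: N_def X_def)
  have e: "dN t = 3 * (r t)^2 * dr t + (a+1) * (X - (r t)^2) / t"
    unfolding dN_def X_def
    by (rule dN_alg) (use t a_pos t_dr[of t] in \<open>auto simp: c_def psi_def\<close>)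
  have r1: "r t > 1" using r_gt1 t by simp
  have "(r t)^2 < r t ^ 3" using r1 by (simp add: power2_eq_square power3_eq_cube)
  hence "(r t)^2 < X" using NX by simp
  hence "(a+1) * (X - (r t)^2) / t > 0" using a_pos t by simp
  moreover have "3 * (r t)^2 * dr t > 0" using dr_pos[of t] t r1 by simp
  ultimately show "dN t > 0" unfolding e by linarith
qed

definition "K t = F t + a * r t - (a + 1)"
definition "dK t = dF t + a * dr t"

lemma K_pos: "0 < t \<Longrightarrow> t < T \<Longrightarrow> K t > 0"
proof (rule pos_lemB[where \<phi> = K and \<phi>' = dK and T = T])
  have "isCont K x" if "x \<in> {0..<T}" for x
    unfolding K_def[abs_def] using that r_cont[of x] by (intro continuous_intros F_cont) auto
  thus "continuous_on {0..<T} K" by (intro continuous_at_imp_continuous_on ballI)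
  show "K 0 = 0" by (simp add: K_def F0 r0)
  fix t assume t: "0 < t" "t < T"
  have "DERIV (\<lambda>t. F t + a * r t - (a + 1)) t :> dF t + a * dr t - 0"
    using G_pos[of t] t by (intro DERIV_diff DERIV_add DERIV_cmult F_deriv' r_deriv DERIV_const) auto
  thus "DERIV K t :> dK t" unfolding K_def[abs_def] dK_def by simp
next
  fix t assume t: "0 < t" "t < T" "K t \<le> 0"
  define rr where "rr = r t"
  define f where "f = F t"
  define s where "s = rr - 1"
  have r1: "rr > 1" using r_gt1 t by (simp add: rr_def)
  have g: "G t > 0" using G_pos t by simp
  have Gf: "G t = f / rr" using g F_pos[of t] t by (simp add: rr_def f_def r_def)
  have fle: "f \<le> a + 1 - a * rr" using t by (simp add: K_def rr_def f_def)
  have e1: "t * dK t = t * dF t + a * (t * dr t)" unfolding dK_def by (simp add: algebra_simps)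
  also have "\<dots> = a * (G t - f) + a * psi t"
    using F_tderiv'[of t] t_dr[of t] t by (simp add: f_def)
  also have "a * (G t - f) = - (a * s / rr) * f"
    unfolding Gf s_def using r1 by (simp add: field_simps)
  finally have e2: "t * dK t = - (a * s / rr) * f + a * psi t" .
  have i: "- (a * s / rr) * f \<ge> - (a * s / rr) * (a + 1 - a * rr)"
    using fle r1 a_pos by (intro mult_left_mono_neg) (auto simp: s_def)
  have e3: "- (a * s / rr) * (a + 1 - a * rr) = - a * (a + 1 - a * rr) * s / rr"
    using r1 by (simp add: field_simps)
  have ap: "a * psi t = a * a - a * a * rr + t * rr^2 / 4"
    unfolding psi_def rr_def using a_pos by (simp add: field_simps power2_eq_square)
  have e4: "- a * (a + 1 - a * rr) * s / rr + (a * a - a * a * rr + t * rr^2 / 4) = t * (rr^3 - c * (s / t)) / (4 * rr)"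
    by (rule dK_alg) (use t r1 a_pos in \<open>auto simp: c_def s_def\<close>)
  have e5: "t * (rr^3 - c * (s / t)) / (4 * rr) = t * N t / (4 * rr)"
    using t by (simp add: N_def rr_def s_def)
  have "t * dK t \<ge> t * N t / (4 * rr)"
    using i unfolding e2 ap e3 e4[symmetric] e5[symmetric] by linarith
  moreover have "t * N t / (4 * rr) > 0" using N_pos[of t] t r1 by simp
  ultimately have "t * dK t > 0" by simp
  thus "dK t > 0" using t by (metis less_eq_real_def zero_less_mult_pos)
qed

end


context bes begin

lemma x_t: "0 < x \<Longrightarrow> x < j \<Longrightarrow> 0 < x^2 \<and> x^2 < T"
  unfolding T_def using zero_props(1) by (auto intro: power_strict_mono)

lemma t_x: "0 < t \<Longrightarrow> t < T \<Longrightarrow> 0 < sqrt t \<and> sqrt t < j \<and> (sqrt t)^2 = t"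
  unfolding T_def using zero_props(1) by (auto simp: real_less_lsqrt)

lemma r_gt_F: "0 < t \<Longrightarrow> t < T \<Longrightarrow> r t > F t"
proof -
  assume t: "0 < t" "t < T"
  have "F t / G t > F t / 1" using F_pos[of t] G_pos[of t] G_lt_1[of t] t
    by (intro divide_strict_left_mono) auto
  thus ?thesis by (simp add: r_def)
qed

lemma main:
  "(\<forall>x. 0 < x \<and> x < j \<longrightarrow>
            (1 - p) * normJ (nu + 1) x + p * (normJ (nu + 1) x / normJ nu x) > 1
          \<and> 1 > (1 - q) * normJ (nu + 1) x + q * (normJ (nu + 1) x / normJ nu x))
         \<longleftrightarrow> (p \<ge> a / (a + 1) \<and> q \<le> 0)"
  (is "(\<forall>x. ?H x) \<longleftrightarrow> _")
proof -
  have H: "(1 - p') * normJ (nu + 1) x + p' * (normJ (nu + 1) x / normJ nu x) = (1 - p') * F (x^2) + p' * r (x^2)" for x p'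
    by (simp add: normJ_B F_def G_def r_def)
  show ?thesis
  proof
    assume pq: "p \<ge> a / (a + 1) \<and> q \<le> 0"
    show "\<forall>x. ?H x"
    proof (intro allI impI)
      fix x assume x: "0 < x \<and> x < j"
      define t where "t = x^2"
      have t: "0 < t" "t < T" using x_t[of x] x by (auto simp: t_def)
      have K: "F t + a * r t - (a + 1) > 0" using K_pos[OF t] by (simp add: K_def)
      have rF: "r t - F t > 0" using r_gt_F[OF t] by simp
      have P: "(1 - p) * F t + p * r t > 1"
      proof -
        have e1: "(1 - p) * F t + p * r t - 1 = (F t - 1) + p * (r t - F t)" by (simp add: algebra_simps)
        have i1: "p * (r t - F t) \<ge> a / (a + 1) * (r t - F t)"
          using pq rF by (intro mult_right_mono) auto
        have e2: "(F t - 1) + a / (a + 1) * (r t - F t) = (F t + a * r t - (a + 1)) / (a + 1)"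
          using a_pos by (simp add: field_simps)
        have "(F t + a * r t - (a + 1)) / (a + 1) > 0" using K a_pos by simp
        thus ?thesis using e1 i1 e2 by linarith
      qed
      have Q: "(1 - q) * F t + q * r t < 1"
      proof -
        have "(1 - q) * F t + q * r t = F t + q * (r t - F t)" by (simp add: algebra_simps)
        also have "\<dots> \<le> F t" using pq rF by (simp add: mult_nonpos_nonneg)
        also have "\<dots> < 1" using F_lt_1[OF t] .
        finally show ?thesis .
      qed
      show "(1 - p) * normJ (nu + 1) x + p * (normJ (nu + 1) x / normJ nu x) > 1
          \<and> 1 > (1 - q) * normJ (nu + 1) x + q * (normJ (nu + 1) x / normJ nu x)" unfolding H using P Q by (simp add: t_def)
    qed
  next
    assume all: "\<forall>x. ?H x"
    have allt: "(1 - p) * F t + p * r t > 1 \<and> 1 > (1 - q) * F t + q * r t" if t: "0 < t" "t < T" for t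
      using all[rule_format, of "sqrt t"] t_x[OF t] unfolding H by auto
    have p: "p \<ge> a / (a + 1)"
    proof (rule ccontr)
      assume "\<not> p \<ge> a / (a + 1)"
      hence pl: "p < a / (a + 1)" by simp
      define L where "L t = (1 - p) * F t + p * r t - 1" for t
      have dL: "DERIV L 0 :> (1 - p) * dF 0 + p * dr 0 - 0"
        unfolding L_def[abs_def] using r_deriv[of 0] G0
        by (intro DERIV_diff DERIV_add DERIV_cmult F_deriv' DERIV_const) auto
      have "(1 - p) * dF 0 + p * dr 0 - 0 = p / (4*a) - 1 / (4*(a+1))"
      proof -
        have D: "4*(a+1) \<noteq> 0" using a_pos by simp
        have g: "\<And>D x::real. D \<noteq> 0 \<Longrightarrow> (1-p)*(-1/D) + p*(x - 1/D) - 0 = p*x - 1/D"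
          by (simp add: field_simps)
        show ?thesis unfolding dr0 dF_def F20 using g[OF D, of "1/(4*a)"] by simp
      qed
      moreover have "p / (4*a) < (a / (a+1)) / (4*a)" using pl a_pos by (intro divide_strict_right_mono) auto
      moreover have "(a / (a+1)) / (4*a) = 1 / (4*(a+1))" using a_pos by simp
      ultimately have "(1 - p) * dF 0 + p * dr 0 - 0 < 0" by linarith
      then obtain d where d: "d > 0" "\<And>h. h > 0 \<Longrightarrow> h < d \<Longrightarrow> L 0 > L (0 + h)"
        using DERIV_neg_dec_right[OF dL] by blast
      define h where "h = min (d/2) (T/2)"
      have h: "0 < h" "h < d" "h < T" using d T_pos by (auto simp: h_def)
      have "L h < L 0" using d(2)[OF h(1,2)] by simp
      moreover have "L 0 = 0" by (simp add: L_def F0 r0)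
      moreover have "L h > 0" using allt[OF h(1,3)] by (simp add: L_def)
      ultimately show False by simp
    qed
    have q: "q \<le> 0"
    proof (rule ccontr)
      assume "\<not> q \<le> 0"
      hence qp: "q > 0" by simp
      define \<Phi> where "\<Phi> t = (1 - q) * F t * G t + q * F t - G t" for t
      have "\<Phi> T > 0" using F_T_pos qp by (simp add: \<Phi>_def G_T)
      moreover have "isCont \<Phi> T" unfolding \<Phi>_def[abs_def]
        by (intro continuous_intros F_cont G_cont)
      ultimately obtain \<delta> where \<delta>: "\<delta> > 0" "\<And>y. dist y T < \<delta> \<Longrightarrow> dist (\<Phi> y) (\<Phi> T) < \<Phi> T"
        unfolding continuous_at_eps_delta by blast
      define t where "t = max (T/2) (T - \<delta>/2)"
      have t: "0 < t" "t < T" "dist t T < \<delta>" using T_pos \<delta> by (auto simp: t_def dist_real_def)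
      have "\<Phi> t > 0" using \<delta>(2)[OF t(3)] by (auto simp: dist_real_def abs_if split: if_splits)
      hence "\<Phi> t / G t > 0" using G_pos[of t] t by simp
      moreover have "\<Phi> t / G t = (1 - q) * F t + q * r t - 1"
        using G_pos[of t] t by (simp add: \<Phi>_def r_def field_simps)
      ultimately show False using allt[OF t(1,2)] by simp
    qed
    show "p \<ge> a / (a + 1) \<and> q \<le> 0" using p q by simp
  qed
qed

end

theorem theorem3p2:
  fixes nu p q :: real
  assumes "-1 < nu" and "nu \<le> 0"
  shows "(\<forall>x. 0 < x \<and> x < first_zero nu \<longrightarrow>
            (1 - p) * normJ (nu + 1) x + p * (normJ (nu + 1) x / normJ nu x) > 1
          \<and> 1 > (1 - q) * normJ (nu + 1) x + q * (normJ (nu + 1) x / normJ nu x))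
         \<longleftrightarrow> (p \<ge> (nu + 1) / (nu + 2) \<and> q \<le> 0)"
proof -
  interpret bes nu using assms by unfold_locales
  have "(nu + 1) / (nu + 2) = a / (a + 1)" by (simp add: a_def add.assoc)
  thus ?thesis using main[of p q] by (simp add: j_def)
qed

end
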